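(* Let $\mathcal{G}$ be a directed graph without self-loops, with vertices $v_1,\dots,v_k$ and edges $e_1,\dots,e_\ell$, and let $A_1,\dots,A_k$ be real $n\times n$ matrices. Suppose there exist invertible matrices $P_1,\dots,P_k$ and Jordan matrices $J_1,\dots,J_k$ with $A_i=P_iJ_iP_i^{-1}$ a Jordan decomposition of $A_i$ for $i=1,\dots,k$, such that for each edge $(r,s)\in\mathcal{E}(\mathcal{G})$ there exists $\eta_{(r,s)}>0$ with $$\Vert P_{(r,s)}e^{\eta_{(r,s)}J_r}\Vert<1,\qquad P_{(r,s)}:=P_s^{-1}P_r.$$ Then there exist open intervals $I_1,\dots,I_\ell\subseteq(0,\infty)$, with $\eta_{(r,s)}\in I_i$ whenever $e_i=(r,s)$, such that the switched system $x'(t)=A_{\sigma(t)}x(t)$, $t\geq 0$, is globally exponentially stable for every switching signal $\sigma\in\mathcal{S}_\mathcal{G}(I_1,\dots,I_\ell)$ that has infinitely many switching times $t_n$ with $t_n\to\infty$.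
   Context: $\mathcal{E}(\mathcal{G})$ is the set of ordered pairs $(i,j)$ such that there is an edge from $v_i$ to $v_j$. A $\mathcal{G}$-admissible signal is a piecewise constant right-continuous function $\sigma:[0,\infty)\to\{1,\dots,k\}$ with discontinuities (switching times) $0=t_0<t_1<t_2<\cdots$ such that, writing $\sigma_i$ for the value of $\sigma$ on $[t_{i-1},t_i)$, we have $(\sigma_i,\sigma_{i+1})\in\mathcal{E}(\mathcal{G})$ for all $i\geq1$; the set of such signals is $\mathcal{S}_\mathcal{G}$. The time spent on the edge $(\sigma_i,\sigma_{i+1})$ at the $i$-th switch is $t_i-t_{i-1}$ (the time spent in subsystem $\sigma_i$ before switching to $\sigma_{i+1}$). For open intervals $I_1,\dots,I_\ell\subseteq(0,\infty)$, $\mathcal{S}_\mathcal{G}(I_1,\dots,I_\ell)$ is the set of $\sigma\in\mathcal{S}_\mathcal{G}$ such that every time spent on edge $e_i$ lies in $I_i$, for each $i$. $\Vert\cdot\Vert$ is the spectral norm. The switched system is globally exponentially stable if there exist $\alpha,\beta>0$ such that every solution satisfies $\Vert x(t)\Vert\leq\alpha e^{-\beta t}\Vert x(0)\Vert$ for all $t\geq0$. *)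

theory Defs
  imports "HOL-Analysis.Analysis"
begin

primrec mat_pow :: "'a::semiring_1^'n^'n \<Rightarrow> nat \<Rightarrow> 'a^'n^'n" where
  "mat_pow M 0 = mat 1"
| "mat_pow M (Suc k) = M ** mat_pow M k"

definition mat_exp :: "complex^'n^'n \<Rightarrow> complex^'n^'n" where
  "mat_exp M = (\<Sum>k. (1 / fact k) *\<^sub>R mat_pow M k)"

definition spec_norm :: "complex^'n^'m \<Rightarrow> real" where
  "spec_norm M = onorm (\<lambda>x::complex^'n. M *v x)"

definition cmat :: "real^'n^'m \<Rightarrow> complex^'n^'m" where
  "cmat A = (\<chi> i j. complex_of_real (A $ i $ j))"

definition next_idx :: "'n::linorder \<Rightarrow> 'n \<Rightarrow> bool" where
  "next_idx i j \<longleftrightarrow> i < j \<and> \<not> (\<exists>m. i < m \<and> m < j)"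

text \<open>Jordan matrix: block diagonal with Jordan blocks, i.e. all entries vanish
  except the diagonal and the superdiagonal; superdiagonal entries are 0 or 1,
  and a superdiagonal 1 only occurs inside a block (equal diagonal entries).\<close>
definition jordan_matrix :: "complex^('n::{finite,linorder})^('n::{finite,linorder}) \<Rightarrow> bool" where
  "jordan_matrix J \<longleftrightarrow>
     (\<forall>i j. i \<noteq> j \<and> \<not> next_idx i j \<longrightarrow> J $ i $ j = 0) \<and>
     (\<forall>i j. next_idx i j \<longrightarrow> (J $ i $ j = 0 \<or> J $ i $ j = 1)) \<and>
     (\<forall>i j. next_idx i j \<and> J $ i $ j = 1 \<longrightarrow> J $ i $ i = J $ j $ j)"

text \<open>Vertices are 1..k, the edge set E is a set of ordered pairs.\<close>
definition admissible_signal ::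
    "(nat \<times> nat) set \<Rightarrow> (real \<Rightarrow> nat) \<Rightarrow> (nat \<Rightarrow> real) \<Rightarrow> bool" where
  "admissible_signal E \<sigma> ts \<longleftrightarrow>
     ts 0 = 0 \<and> strict_mono ts \<and> filterlim ts at_top sequentially \<and>
     (\<forall>i. \<forall>t\<in>{ts i..<ts (Suc i)}. \<sigma> t = \<sigma> (ts i)) \<and>
     (\<forall>i. (\<sigma> (ts i), \<sigma> (ts (Suc i))) \<in> E)"

definition dwell_in ::
    "(nat \<times> nat \<Rightarrow> real set) \<Rightarrow> (real \<Rightarrow> nat) \<Rightarrow> (nat \<Rightarrow> real) \<Rightarrow> bool" where
  "dwell_in I \<sigma> ts \<longleftrightarrow> (\<forall>i. ts (Suc i) - ts i \<in> I (\<sigma> (ts i), \<sigma> (ts (Suc i))))"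

definition switched_solution ::
    "(nat \<Rightarrow> real^'n^'n) \<Rightarrow> (real \<Rightarrow> nat) \<Rightarrow> (nat \<Rightarrow> real) \<Rightarrow> (real \<Rightarrow> real^'n) \<Rightarrow> bool" where
  "switched_solution A \<sigma> ts x \<longleftrightarrow>
     continuous_on {0..} x \<and>
     (\<forall>t>0. t \<notin> range ts \<longrightarrow> (x has_vector_derivative (A (\<sigma> t) *v x t)) (at t))"

definition switched_GES ::
    "(nat \<Rightarrow> real^'n^'n) \<Rightarrow> (real \<Rightarrow> nat) \<Rightarrow> (nat \<Rightarrow> real) \<Rightarrow> bool" where
  "switched_GES A \<sigma> ts \<longleftrightarrow>
     (\<exists>\<alpha>>0. \<exists>\<beta>>0. \<forall>x. switched_solution A \<sigma> ts x \<longrightarrow>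
        (\<forall>t\<ge>0. norm (x t) \<le> \<alpha> * exp (- \<beta> * t) * norm (x 0)))"

end

theory Submission
  imports Defs "HOL-Analysis.Analysis"
begin


typedef (overloaded) ('n::finite) endo = "UNIV :: ((complex^'n) \<Rightarrow>\<^sub>L (complex^'n)) set" by simp

setup_lifting type_definition_endo

instantiation endo :: (finite) real_normed_vector
begin
lift_definition norm_endo :: "'a endo \<Rightarrow> real" is norm .
lift_definition minus_endo :: "'a endo \<Rightarrow> 'a endo \<Rightarrow> 'a endo" is "(-)" .
lift_definition plus_endo :: "'a endo \<Rightarrow> 'a endo \<Rightarrow> 'a endo" is "(+)" .
lift_definition uminus_endo :: "'a endo \<Rightarrow> 'a endo" is "uminus" .
lift_definition zero_endo :: "'a endo" is 0 .
lift_definition scaleR_endo :: "real \<Rightarrow> 'a endo \<Rightarrow> 'a endo" is scaleR .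
definition dist_endo :: "'a endo \<Rightarrow> 'a endo \<Rightarrow> real" where "dist_endo a b = norm (a - b)"
definition uniformity_endo :: "('a endo \<times> 'a endo) filter" where
  "uniformity_endo = (INF e\<in>{0 <..}. principal {(x, y). dist x y < e})"
definition open_endo :: "'a endo set \<Rightarrow> bool"
  where "open_endo S = (\<forall>x\<in>S. \<forall>\<^sub>F (x', y) in uniformity. x' = x \<longrightarrow> y \<in> S)"
definition sgn_endo :: "'a endo \<Rightarrow> 'a endo" where "sgn_endo x = scaleR (inverse (norm x)) x"
instance
  apply standard
  unfolding dist_endo_def open_endo_def sgn_endo_def uniformity_endo_def
  apply (rule refl | (transfer, force simp: norm_triangle_ineq algebra_simps scaleR_add_right scaleR_add_left))+
  done
end

instantiation endo :: (finite) real_normed_algebra_1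
begin
lift_definition times_endo :: "'a endo \<Rightarrow> 'a endo \<Rightarrow> 'a endo" is "(o\<^sub>L)" .
lift_definition one_endo :: "'a endo" is id_blinfun .
instance
proof
  show "norm (1::'a endo) = 1"
    apply transfer
    apply (rule norm_blinfun_eqI[where x="axis undefined 1"])
      apply simp_all
    done
  fix a b c :: "'a endo" and r :: real
  show "a * b * c = a * (b * c)" by transfer (auto intro!: blinfun_eqI)
  show "(a + b) * c = a * c + b * c" by transfer (auto intro!: blinfun_eqI simp: blinfun.bilinear_simps)
  show "a * (b + c) = a * b + a * c" by transfer (auto intro!: blinfun_eqI simp: blinfun.bilinear_simps)
  show "1 * a = a" by transfer (auto intro!: blinfun_eqI)
  show "a * 1 = a" by transfer (auto intro!: blinfun_eqI)
  show "(0::'a endo) \<noteq> 1"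
  proof
    assume "(0::'a endo) = 1"
    hence "norm (0::'a endo) = norm (1::'a endo)" by simp
    thus False using \<open>norm (1::'a endo) = 1\<close> by simp
  qed
  show "r *\<^sub>R a * b = r *\<^sub>R (a * b)" by transfer (auto intro!: blinfun_eqI simp: blinfun.bilinear_simps)
  show "a * r *\<^sub>R b = r *\<^sub>R (a * b)" by transfer (auto intro!: blinfun_eqI simp: blinfun.bilinear_simps)
  show "norm (a * b) \<le> norm a * norm b" by transfer (rule norm_blinfun_compose)
qed
end
instance endo :: (finite) banach
proof
  fix X :: "nat \<Rightarrow> 'a endo"
  assume "Cauchy X"
  hence "Cauchy (\<lambda>n. Rep_endo (X n))"
    unfolding Cauchy_def dist_norm by (simp add: minus_endo.rep_eq norm_endo.rep_eq)
  then obtain L where L: "(\<lambda>n. Rep_endo (X n)) \<longlonglongrightarrow> L"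
    using convergent_eq_Cauchy by blast
  have "X \<longlonglongrightarrow> Abs_endo L"
    using L unfolding LIMSEQ_def dist_norm
    by (simp add: minus_endo.rep_eq norm_endo.rep_eq Abs_endo_inverse)
  thus "convergent X" by (auto simp: convergent_def)
qed


definition app :: "'n::finite endo \<Rightarrow> complex^'n \<Rightarrow> complex^'n" where
  "app E v = blinfun_apply (Rep_endo E) v"

lemma app_mult: "app (E * F) v = app E (app F v)"
  by (simp add: app_def times_endo.rep_eq)

lemma app_one[simp]: "app 1 v = v"
  by (simp add: app_def one_endo.rep_eq)

lemma norm_app: "norm (app E v) \<le> norm E * norm v"
  by (simp add: app_def norm_endo.rep_eq norm_blinfun)

lemma app_scaleR: "app (c *\<^sub>R E) v = c *\<^sub>R app E v"
  by (simp add: app_def scaleR_endo.rep_eq blinfun.scaleR_left)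

lemma bounded_bilinear_app: "bounded_bilinear app"
proof
  fix a a' :: "'a endo" and b b' :: "complex^'a" and r :: real
  show "app (a + a') b = app a b + app a' b"
    by (simp add: app_def plus_endo.rep_eq blinfun.add_left)
  show "app a (b + b') = app a b + app a b'"
    by (simp add: app_def blinfun.add_right)
  show "app (r *\<^sub>R a) b = r *\<^sub>R app a b"
    by (simp add: app_scaleR)
  show "app a (r *\<^sub>R b) = r *\<^sub>R app a b"
    by (simp add: app_def blinfun.scaleR_right)
  show "\<exists>K. \<forall>a b. norm (app a b) \<le> norm a * norm b * K"
    by (rule exI[of _ 1]) (simp add: norm_app)
qed

lemma endo_eqI: "(\<And>v. app E v = app F v) \<Longrightarrow> E = F"
  unfolding app_def by (metis Rep_endo_inject blinfun_eqI)

lemma mv_scaleR: "(M::complex^'n^'m) *v (c *\<^sub>R v) = c *\<^sub>R (M *v v)"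
  by (simp add: vec_eq_iff matrix_vector_mult_def scaleR_sum_right mult_scaleR_right mult_scaleR_left)

lemma mv_linear: "linear (\<lambda>v::complex^'n::finite. (M::complex^'n^'m::finite) *v v)"
  by (rule linearI) (simp_all add: matrix_vector_right_distrib mv_scaleR)

lemma mv_bl: "bounded_linear (\<lambda>v::complex^'n::finite. (M::complex^'n^'m::finite) *v v)"
  using mv_linear linear_conv_bounded_linear by blast

definition LM :: "complex^'n^'n \<Rightarrow> 'n::finite endo" where
  "LM M = Abs_endo (Blinfun (\<lambda>v. M *v v))"

lemma app_LM[simp]: "app (LM M) v = M *v v"
  by (simp add: app_def LM_def Abs_endo_inverse bounded_linear_Blinfun_apply mv_bl)

lemma LM_mult: "LM (M ** N) = LM M * LM N"
  by (rule endo_eqI) (simp add: app_mult matrix_vector_mul_assoc)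

lemma LM_one: "LM (mat 1) = 1"
  by (rule endo_eqI) simp

lemma smv_scaleR: "(c *\<^sub>R (M::complex^'n^'m)) *v v = c *\<^sub>R (M *v v)"
  by (simp add: vec_eq_iff matrix_vector_mult_def scaleR_sum_right mult_scaleR_right mult_scaleR_left)

lemma LM_scaleR: "LM (c *\<^sub>R M) = c *\<^sub>R LM M"
  by (rule endo_eqI) (simp add: app_scaleR smv_scaleR)

lemma LM_add: "LM (M + N) = LM M + LM N"
  by (rule endo_eqI) (simp add: bounded_bilinear.add_left[OF bounded_bilinear_app] matrix_vector_mult_add_rdistrib)

lemma LM_linear: "linear LM"
  by (rule linearI) (simp_all add: LM_add LM_scaleR)

lemma LM_bl: "bounded_linear LM"
  using LM_linear linear_conv_bounded_linear by blast

lemma LM_pow: "LM (mat_pow M k) = LM M ^ k"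
  by (induction k) (simp_all add: LM_one LM_mult)

lemma spec_norm_LM: "spec_norm M = norm (LM M)"
  by (simp add: spec_norm_def norm_endo.rep_eq LM_def Abs_endo_inverse norm_blinfun.rep_eq
       bounded_linear_Blinfun_apply mv_bl)

lemma norm_le_sum_vec: "norm (x::'b::real_normed_vector^'n::finite) \<le> (\<Sum>i\<in>UNIV. norm (x $ i))"
  unfolding norm_vec_def by (rule L2_set_le_sum) simp

definition RR :: "'n::finite endo \<Rightarrow> complex^'n^'n" where
  "RR E = (\<chi> i j. app E (axis j 1) $ i)"

lemma RR_LM: "RR (LM M) = M"
  by (simp add: RR_def vec_eq_iff matrix_vector_mult_def axis_def if_distrib cong: if_cong)

lemma RR_bl: "bounded_linear RR"
proof (rule bounded_linear_intro[where K = "real (CARD('a)) * real (CARD('a))"])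
  fix E F :: "'a endo" and r :: real
  show "RR (E + F) = RR E + RR F"
    by (simp add: RR_def vec_eq_iff bounded_bilinear.add_left[OF bounded_bilinear_app])
  show "RR (r *\<^sub>R E) = r *\<^sub>R RR E"
    by (simp add: RR_def vec_eq_iff app_scaleR)
  have "norm (RR E) \<le> (\<Sum>i\<in>UNIV. norm (RR E $ i))" by (rule norm_le_sum_vec)
  also have "\<dots> \<le> (\<Sum>i\<in>(UNIV::'a set). \<Sum>j\<in>(UNIV::'a set). norm (RR E $ i $ j))"
    by (rule sum_mono) (rule norm_le_sum_vec)
  also have "\<dots> \<le> (\<Sum>i\<in>(UNIV::'a set). \<Sum>j\<in>(UNIV::'a set). norm E)"
  proof (intro sum_mono)
    fix i j :: 'a
    have "norm (RR E $ i $ j) = norm (app E (axis j 1) $ i)" by (simp add: RR_def)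
    also have "\<dots> \<le> norm (app E (axis j 1))" by (rule Finite_Cartesian_Product.norm_nth_le)
    also have "\<dots> \<le> norm E * norm (axis j (1::complex))" by (rule norm_app)
    also have "\<dots> = norm E" by simp
    finally show "norm (RR E $ i $ j) \<le> norm E" .
  qed
  also have "\<dots> = norm E * (real (CARD('a)) * real (CARD('a)))" by simp
  finally show "norm (RR E) \<le> norm E * (real (CARD('a)) * real (CARD('a)))" .
qed

lemma LM_exp: "LM (mat_exp M) = exp (LM M)"
proof -
  let ?f = "\<lambda>k. (1 / fact k) *\<^sub>R mat_pow M k"
  have "(\<lambda>k. LM M ^ k /\<^sub>R fact k) sums exp (LM M)" by (rule exp_converges)
  hence "(\<lambda>k. RR (LM M ^ k /\<^sub>R fact k)) sums RR (exp (LM M))"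
    by (rule bounded_linear.sums[OF RR_bl])
  moreover have "\<And>k. RR (LM M ^ k /\<^sub>R fact k) = ?f k"
    by (simp add: LM_pow[symmetric] LM_scaleR[symmetric] RR_LM divide_inverse_commute)
  ultimately have s: "?f sums RR (exp (LM M))" by simp
  hence "(\<lambda>k. LM (?f k)) sums LM (RR (exp (LM M)))"
    by (rule bounded_linear.sums[OF LM_bl])
  moreover have "\<And>k. LM (?f k) = LM M ^ k /\<^sub>R fact k"
    by (simp add: LM_pow LM_scaleR divide_inverse_commute)
  ultimately have "(\<lambda>k. LM M ^ k /\<^sub>R fact k) sums LM (RR (exp (LM M)))" by simp
  hence "LM (RR (exp (LM M))) = exp (LM M)"
    using exp_converges sums_unique2 by blast
  moreover have "mat_exp M = RR (exp (LM M))"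
    unfolding mat_exp_def using s sums_unique by metis
  ultimately show ?thesis by simp
qed



lemma exp_deriv_neg:
  "((\<lambda>t. exp ((a - t) *\<^sub>R (M::'n::finite endo))) has_vector_derivative - (exp ((a - t) *\<^sub>R M) * M)) (at t)"
proof -
  have 1: "((\<lambda>t. a - t) has_vector_derivative (-1)) (at t)"
    using has_vector_derivative_diff[OF has_vector_derivative_const has_vector_derivative_id] by simp
  have 2: "((\<lambda>s. exp (s *\<^sub>R M)) has_vector_derivative exp ((a - t) *\<^sub>R M) * M) (at (a - t))"
    by (rule exp_scaleR_has_vector_derivative_right)
  have "((\<lambda>s. exp (s *\<^sub>R M)) \<circ> (\<lambda>t. a - t) has_vector_derivative (-1) *\<^sub>R (exp ((a - t) *\<^sub>R M) * M)) (at t)"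
    by (rule vector_diff_chain_at[OF 1 2])
  moreover have "(\<lambda>s. exp (s *\<^sub>R M)) \<circ> (\<lambda>t. a - t) = (\<lambda>t. exp ((a - t) *\<^sub>R M))" by (rule ext) (simp only: o_def)
  moreover have "(-1::real) *\<^sub>R (exp ((a - t) *\<^sub>R M) * M) = - (exp ((a - t) *\<^sub>R M) * M)" by (rule scaleR_minus1_left)
  ultimately show ?thesis by (simp only:)
qed
lemma exp_cont: "continuous_on S (\<lambda>t. exp ((a - t) *\<^sub>R (M::'n::finite endo)))"
  by (rule continuous_at_imp_continuous_on, rule ballI, rule has_vector_derivative_continuous[OF exp_deriv_neg])

lemma ode_exp:
  fixes x :: "real \<Rightarrow> complex^'n::finite" and M :: "'n endo"
  assumes ab: "a \<le> b" and cont: "continuous_on {a..b} x"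
    and der: "\<And>t. t \<in> {a<..<b} \<Longrightarrow> (x has_vector_derivative app M (x t)) (at t)"
  shows "x b = app (exp ((b - a) *\<^sub>R M)) (x a)"
proof -
  define g where "g t = app (exp ((a - t) *\<^sub>R M)) (x t)" for t
  have gc: "continuous_on {a..b} g"
    unfolding g_def by (rule bounded_bilinear.continuous_on[OF bounded_bilinear_app exp_cont cont])
  have gd: "(g has_derivative (\<lambda>h. 0)) (at t within {a..b})" if "t \<in> {a..b} - {a, b}" for t
  proof -
    from that have t: "t \<in> {a<..<b}" by auto
    have "(g has_vector_derivative
        (app (exp ((a - t) *\<^sub>R M)) (app M (x t)) + app (- (exp ((a - t) *\<^sub>R M) * M)) (x t))) (at t)"
      unfolding g_def by (rule bounded_bilinear.has_vector_derivative[OF bounded_bilinear_app exp_deriv_neg der[OF t]])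
    moreover have "app (exp ((a - t) *\<^sub>R M)) (app M (x t)) + app (- (exp ((a - t) *\<^sub>R M) * M)) (x t) = 0"
      by (simp add: bounded_bilinear.minus_left[OF bounded_bilinear_app] app_mult)
    ultimately have "(g has_vector_derivative 0) (at t)" by simp
    hence "(g has_derivative (\<lambda>h. 0)) (at t)" by (simp add: has_vector_derivative_def)
    thus ?thesis by (rule has_derivative_at_withinI)
  qed
  have "g b = g a"
    by (rule has_derivative_zero_unique_strong_interval[of "{a, b}" a b g "g a" b]) (use ab gc gd in auto)
  hence "g b = x a" by (simp add: g_def)
  hence "app (exp ((b - a) *\<^sub>R M)) (g b) = app (exp ((b - a) *\<^sub>R M)) (x a)" by simp
  moreover have "exp ((b - a) *\<^sub>R M) * exp ((a - b) *\<^sub>R M) = 1"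
  proof -
    have "exp ((b - a) *\<^sub>R M) * exp ((a - b) *\<^sub>R M) = exp ((b - a) *\<^sub>R M + (a - b) *\<^sub>R M)"
      by (rule exp_add_commuting[symmetric]) (simp add: algebra_simps)
    also have "(b - a) *\<^sub>R M + (a - b) *\<^sub>R M = 0" by (simp add: algebra_simps)
    finally show ?thesis by simp
  qed
  ultimately show ?thesis by (simp add: g_def app_mult[symmetric])
qed

lemma pow_conj:
  fixes Q Qi X :: "'n::finite endo"
  assumes "Q * Qi = 1" "Qi * Q = 1"
  shows "(Q * X * Qi) ^ k = Q * X ^ k * Qi"
proof (induction k)
  case 0 show ?case using assms(1) by simp
next
  case (Suc k)
  have "(Q * X * Qi) ^ Suc k = Q * X * Qi * (Q * X ^ k * Qi)" using Suc.IH by simp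
  also have "\<dots> = Q * X * (Qi * Q) * X ^ k * Qi" by (simp add: mult.assoc)
  also have "\<dots> = Q * X ^ Suc k * Qi" using assms(2) by (simp add: mult.assoc)
  finally show ?case .
qed

lemma exp_conj:
  fixes Q Qi X :: "'n::finite endo"
  assumes "Q * Qi = 1" "Qi * Q = 1"
  shows "exp (Q * X * Qi) = Q * exp X * Qi"
proof -
  have bl: "bounded_linear (\<lambda>Y::'n endo. Q * Y * Qi)"
    by (intro bounded_linear_compose[OF bounded_linear_mult_left] bounded_linear_mult_right)
  have "(\<lambda>k. Q * (X ^ k /\<^sub>R fact k) * Qi) sums (Q * exp X * Qi)"
    by (rule bounded_linear.sums[OF bl exp_converges])
  moreover have "\<And>k. Q * (X ^ k /\<^sub>R fact k) * Qi = (Q * X * Qi) ^ k /\<^sub>R fact k"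
    using pow_conj[OF assms, of X] by simp
  ultimately have "(\<lambda>k. (Q * X * Qi) ^ k /\<^sub>R fact k) sums (Q * exp X * Qi)" by simp
  thus ?thesis using exp_converges sums_unique2 by blast
qed



definition cv :: "real^'n \<Rightarrow> complex^'n" where
  "cv v = (\<chi> i. complex_of_real (v $ i))"

lemma cv_linear: "linear (cv :: real^'n::finite \<Rightarrow> complex^'n)"
  by (rule linearI) (simp_all add: cv_def vec_eq_iff scaleR_conv_of_real[where 'a=complex])

lemma cv_bl: "bounded_linear (cv :: real^'n::finite \<Rightarrow> complex^'n)"
  using cv_linear linear_conv_bounded_linear by blast

lemma norm_cv: "norm (cv v) = norm v"
  by (simp add: cv_def norm_vec_def)

lemma cmat_cv: "cmat M *v cv v = cv (M *v v)"
  by (simp add: cmat_def cv_def vec_eq_iff matrix_vector_mult_def)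

lemma ts_between:
  assumes sm: "strict_mono (ts :: nat \<Rightarrow> real)" and "ts i < s" "s < ts (Suc i)"
  shows "s \<notin> range ts"
proof
  assume "s \<in> range ts"
  then obtain m where m: "s = ts m" by auto
  have "i < m" using assms(2) m sm by (metis not_less_iff_gr_or_eq strict_mono_less)
  moreover have "m < Suc i" using assms(3) m sm by (metis not_less_iff_gr_or_eq strict_mono_less)
  ultimately show False by simp
qed


lemma ges_core:
  fixes A :: "nat \<Rightarrow> real^'n::finite^'n" and Pm Pi Jm :: "nat \<Rightarrow> 'n endo" and V :: "nat set"
  assumes adm: "admissible_signal E \<sigma> ts"
    and finV: "finite V" and inV: "\<And>i. \<sigma> (ts i) \<in> V"
    and expA: "\<And>j \<tau>. j \<in> V \<Longrightarrow> exp (\<tau> *\<^sub>R LM (cmat (A j))) = Pm j * exp (\<tau> *\<^sub>R Jm j) * Pi j"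
    and step: "\<And>i. norm (Pi (\<sigma> (ts (Suc i))) * Pm (\<sigma> (ts i)) * exp ((ts (Suc i) - ts i) *\<^sub>R Jm (\<sigma> (ts i)))) \<le> q"
    and q1: "1/2 \<le> q" and q2: "q < 1"
    and T1: "\<And>i. ts (Suc i) - ts i \<le> T" and T2: "0 < T"
  shows "switched_GES A \<sigma> ts"
proof -
  have ts0: "ts 0 = 0" and sm: "strict_mono ts" and lim: "filterlim ts at_top sequentially"
    and const: "\<And>i t. t \<in> {ts i..<ts (Suc i)} \<Longrightarrow> \<sigma> t = \<sigma> (ts i)"
    using adm unfolding admissible_signal_def by auto
  define CP where "CP = (\<Sum>j\<in>V. norm (Pm j))"
  define CPi where "CPi = (\<Sum>j\<in>V. norm (Pi j))"
  define CJ where "CJ = (\<Sum>j\<in>V. norm (Jm j))"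
  have CP: "norm (Pm j) \<le> CP" if "j \<in> V" for j
    unfolding CP_def by (rule member_le_sum) (use that finV in auto)
  have CPi: "norm (Pi j) \<le> CPi" if "j \<in> V" for j
    unfolding CPi_def by (rule member_le_sum) (use that finV in auto)
  have CJ: "norm (Jm j) \<le> CJ" if "j \<in> V" for j
    unfolding CJ_def by (rule member_le_sum) (use that finV in auto)
  have CP0: "0 \<le> CP" "0 \<le> CPi" "0 \<le> CJ" unfolding CP_def CPi_def CJ_def by (auto intro: sum_nonneg)
  have qpos: "0 < q" using q1 by simp
  have lnq: "ln q < 0" using qpos q2 by simp
  define \<beta> where "\<beta> = - ln q / T"
  define K where "K = CP * exp (T * CJ) * CPi"
  have K0: "0 \<le> K" unfolding K_def using CP0 by simp
  define \<alpha> where "\<alpha> = (K + 1) / q"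
  have apos: "\<alpha> > 0" unfolding \<alpha>_def using K0 qpos by simp
  have bpos: "\<beta> > 0" unfolding \<beta>_def using lnq T2 by (simp add: divide_neg_pos)
  have tsge: "0 \<le> ts i" for i
    using strict_mono_less_eq[OF sm, of 0 i] ts0 by simp
  have tsT: "ts i \<le> real i * T" for i
  proof (induction i)
    case 0 then show ?case using ts0 by simp
  next
    case (Suc i) then show ?case using T1[of i] by (simp add: algebra_simps)
  qed
  have main: "norm (x t) \<le> \<alpha> * exp (- \<beta> * t) * norm (x 0)"
    if sol: "switched_solution A \<sigma> ts x" and t0: "0 \<le> t" for x t
  proof -
    have xcont: "continuous_on {0..} x"
      and xder: "\<And>s. 0 < s \<Longrightarrow> s \<notin> range ts \<Longrightarrow> (x has_vector_derivative A (\<sigma> s) *v x s) (at s)"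
      using sol unfolding switched_solution_def by auto
    define xc where "xc s = cv (x s)" for s
    have xcc: "continuous_on {0..} xc"
      unfolding xc_def by (rule bounded_linear.continuous_on[OF cv_bl xcont])
    have xcd: "(xc has_vector_derivative app (LM (cmat (A (\<sigma> s)))) (xc s)) (at s)"
      if "0 < s" "s \<notin> range ts" for s
    proof -
      have "((\<lambda>s. cv (x s)) has_vector_derivative cv (A (\<sigma> s) *v x s)) (at s)"
        by (rule bounded_linear.has_vector_derivative[OF cv_bl xder[OF that]])
      thus ?thesis by (simp add: xc_def[abs_def] cmat_cv)
    qed
    have seg: "xc s = app (exp ((s - ts i) *\<^sub>R LM (cmat (A (\<sigma> (ts i)))))) (xc (ts i))"
      if "ts i \<le> s" "s \<le> ts (Suc i)" for i s
    proof (rule ode_exp)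
      show "ts i \<le> s" by fact
      show "continuous_on {ts i..s} xc"
        by (rule continuous_on_subset[OF xcc]) (use tsge in auto)
      fix u assume u: "u \<in> {ts i<..<s}"
      hence u1: "0 < u" using tsge[of i] by auto
      have u2: "u \<notin> range ts" by (rule ts_between[OF sm, of i]) (use u that in auto)
      have "\<sigma> u = \<sigma> (ts i)" by (rule const) (use u that in auto)
      thus "(xc has_vector_derivative app (LM (cmat (A (\<sigma> (ts i))))) (xc u)) (at u)"
        using xcd[OF u1 u2] by simp
    qed
    define y where "y i = app (Pi (\<sigma> (ts i))) (xc (ts i))" for i
    have seg2: "xc s = app (Pm (\<sigma> (ts i)) * exp ((s - ts i) *\<^sub>R Jm (\<sigma> (ts i)))) (y i)"
      if "ts i \<le> s" "s \<le> ts (Suc i)" for i s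
      using seg[OF that] expA[OF inV[of i], of "s - ts i"] by (simp add: y_def app_mult)
    have ystep: "norm (y (Suc i)) \<le> q * norm (y i)" for i
    proof -
      have "y (Suc i) = app (Pi (\<sigma> (ts (Suc i)))) (app (Pm (\<sigma> (ts i)) * exp ((ts (Suc i) - ts i) *\<^sub>R Jm (\<sigma> (ts i)))) (y i))"
        unfolding y_def[of "Suc i"] using seg2[of i "ts (Suc i)"] sm by (simp add: strict_mono_less_eq)
      also have "\<dots> = app (Pi (\<sigma> (ts (Suc i))) * Pm (\<sigma> (ts i)) * exp ((ts (Suc i) - ts i) *\<^sub>R Jm (\<sigma> (ts i)))) (y i)"
        by (simp add: app_mult mult.assoc)
      finally have "norm (y (Suc i)) \<le> norm (Pi (\<sigma> (ts (Suc i))) * Pm (\<sigma> (ts i)) * exp ((ts (Suc i) - ts i) *\<^sub>R Jm (\<sigma> (ts i)))) * norm (y i)"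
        using norm_app by metis
      also have "\<dots> \<le> q * norm (y i)" by (rule mult_right_mono[OF step]) simp
      finally show ?thesis .
    qed
    have ypow: "norm (y i) \<le> q ^ i * norm (y 0)" for i
    proof (induction i)
      case (Suc i)
      have "norm (y (Suc i)) \<le> q * norm (y i)" by (rule ystep)
      also have "\<dots> \<le> q * (q ^ i * norm (y 0))" using Suc qpos by simp
      finally show ?case by (simp add: mult.assoc)
    qed simp
    have y0: "norm (y 0) \<le> CPi * norm (x 0)"
    proof -
      have "norm (y 0) \<le> norm (Pi (\<sigma> (ts 0))) * norm (xc (ts 0))" unfolding y_def by (rule norm_app)
      also have "\<dots> \<le> CPi * norm (x 0)"
        using CPi[OF inV[of 0]] by (simp add: xc_def norm_cv ts0 mult_right_mono)
      finally show ?thesis .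
    qed
    obtain i where i1: "ts i \<le> t" and i2: "t < ts (Suc i)"
    proof -
      from lim have "eventually (\<lambda>n. t + 1 \<le> ts n) sequentially" by (simp add: filterlim_at_top)
      then obtain N where "t + 1 \<le> ts N" by (auto simp: eventually_sequentially)
      hence ex: "\<exists>m. t < ts m" by (intro exI[of _ N]) simp
      define m where "m = (LEAST m. t < ts m)"
      have m1: "t < ts m" unfolding m_def using LeastI_ex[OF ex] .
      have "m \<noteq> 0" using m1 ts0 t0 by (intro notI) simp
      then obtain j where j: "m = Suc j" by (cases m) auto
      have "\<not> t < ts j" using not_less_Least[of j "\<lambda>m. t < ts m"] j unfolding m_def by simp
      thus ?thesis using that[of j] m1 j by simp
    qed
    let ?v = "\<sigma> (ts i)"
    have expb: "norm (exp ((t - ts i) *\<^sub>R Jm ?v)) \<le> exp (T * CJ)"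
    proof -
      have "norm (exp ((t - ts i) *\<^sub>R Jm ?v)) \<le> exp (norm ((t - ts i) *\<^sub>R Jm ?v))" by (rule norm_exp)
      also have "norm ((t - ts i) *\<^sub>R Jm ?v) = (t - ts i) * norm (Jm ?v)" using i1 by simp
      also have "(t - ts i) * norm (Jm ?v) \<le> T * CJ"
        by (rule mult_mono) (use i1 i2 T1[of i] CJ[OF inV[of i]] T2 in auto)
      finally show ?thesis by simp
    qed
    have qi: "q ^ i \<le> exp (- \<beta> * t) / q"
    proof -
      have "t < real (Suc i) * T" using i2 tsT[of "Suc i"] by simp
      hence "t / T - 1 < real i" using T2 by (simp add: field_simps)
      hence "real i * ln q \<le> (t / T - 1) * ln q" using lnq by (intro mult_right_mono_neg) auto
      also have "(t / T - 1) * ln q = - \<beta> * t + - ln q" unfolding \<beta>_def using T2 by (simp add: field_simps)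
      finally have "exp (real i * ln q) \<le> exp (- \<beta> * t + - ln q)" by simp
      also have "exp (- \<beta> * t + - ln q) = exp (- \<beta> * t) / q"
        using qpos by (simp add: exp_add[symmetric] exp_diff exp_minus divide_inverse)
      also have "exp (real i * ln q) = q ^ i" using qpos by (simp add: exp_of_nat_mult)
      finally show ?thesis .
    qed
    have "norm (x t) = norm (xc t)" by (simp add: xc_def norm_cv)
    also have "xc t = app (Pm ?v * exp ((t - ts i) *\<^sub>R Jm ?v)) (y i)"
      using seg2[of i t] i1 i2 by simp
    also have "norm \<dots> \<le> norm (Pm ?v * exp ((t - ts i) *\<^sub>R Jm ?v)) * norm (y i)" by (rule norm_app)
    also have "\<dots> \<le> (CP * exp (T * CJ)) * (q ^ i * (CPi * norm (x 0)))"
    proof (rule mult_mono)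
      show "norm (Pm ?v * exp ((t - ts i) *\<^sub>R Jm ?v)) \<le> CP * exp (T * CJ)"
        using norm_mult_ineq[of "Pm ?v" "exp ((t - ts i) *\<^sub>R Jm ?v)"]
          mult_mono[OF CP[OF inV[of i]] expb] CP0 by (meson norm_ge_zero order_trans)
      show "norm (y i) \<le> q ^ i * (CPi * norm (x 0))"
        using ypow[of i] y0 qpos by (meson mult_left_mono order_trans zero_le_power less_imp_le)
    qed (use CP0 in auto)
    also have "\<dots> = K * norm (x 0) * q ^ i" unfolding K_def by (simp add: ac_simps)
    also have "\<dots> \<le> K * norm (x 0) * (exp (- \<beta> * t) / q)"
      by (rule mult_left_mono[OF qi]) (use K0 in simp)
    also have "\<dots> \<le> (K + 1) * norm (x 0) * (exp (- \<beta> * t) / q)"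
      by (intro mult_right_mono) (use qpos in auto)
    also have "\<dots> = \<alpha> * exp (- \<beta> * t) * norm (x 0)" unfolding \<alpha>_def by (simp add: field_simps)
    finally show ?thesis .
  qed
  show ?thesis unfolding switched_GES_def using apos bpos main by blast
qed



theorem theorem3p1:
  fixes k :: nat
    and E :: "(nat \<times> nat) set"
    and A :: "nat \<Rightarrow> real^('n::{finite,linorder})^('n::{finite,linorder})"
    and P J :: "nat \<Rightarrow> complex^('n::{finite,linorder})^('n::{finite,linorder})"
    and \<eta> :: "nat \<times> nat \<Rightarrow> real"
  assumes edges: "E \<subseteq> {1..k} \<times> {1..k}"
    and no_loops: "\<forall>(r, s)\<in>E. r \<noteq> s"
    and jordan: "\<forall>i\<in>{1..k}. invertible (P i) \<and> jordan_matrix (J i) \<and>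
                   cmat (A i) = P i ** J i ** matrix_inv (P i)"
    and eta: "\<forall>(r, s)\<in>E. \<eta> (r, s) > 0 \<and>
                spec_norm ((matrix_inv (P s) ** P r) ** mat_exp (\<eta> (r, s) *\<^sub>R J r)) < 1"
  shows "\<exists>I :: nat \<times> nat \<Rightarrow> real set.
           (\<forall>e\<in>E. open (I e) \<and> is_interval (I e) \<and> I e \<subseteq> {0<..} \<and> \<eta> e \<in> I e) \<and>
           (\<forall>\<sigma> ts. admissible_signal E \<sigma> ts \<and> dwell_in I \<sigma> ts \<longrightarrow> switched_GES A \<sigma> ts)"
proof -
  define Pm where "Pm i = (LM (P i) :: 'n endo)" for i
  define Pi where "Pi i = (LM (matrix_inv (P i)) :: 'n endo)" for i
  define Jm where "Jm i = (LM (J i) :: 'n endo)" for i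
  have inv: "P i ** matrix_inv (P i) = mat 1 \<and> matrix_inv (P i) ** P i = mat 1" if "i \<in> {1..k}" for i
  proof -
    have "\<exists>B. P i ** B = mat 1 \<and> B ** P i = mat 1" using jordan that unfolding invertible_def by blast
    thus ?thesis unfolding matrix_inv_def by (rule someI_ex)
  qed
  have PPi: "Pm i * Pi i = 1" "Pi i * Pm i = 1" if "i \<in> {1..k}" for i
    using inv[OF that] unfolding Pm_def Pi_def by (metis LM_mult LM_one)+
  have expA: "exp (\<tau> *\<^sub>R LM (cmat (A j))) = Pm j * exp (\<tau> *\<^sub>R Jm j) * Pi j" if "j \<in> {1..k}" for j \<tau>
  proof -
    have "LM (cmat (A j)) = Pm j * Jm j * Pi j"
      using jordan that unfolding Pm_def Jm_def Pi_def by (simp add: LM_mult)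
    hence "\<tau> *\<^sub>R LM (cmat (A j)) = Pm j * (\<tau> *\<^sub>R Jm j) * Pi j"
      by (simp add: mult_scaleR_left mult_scaleR_right)
    hence "exp (\<tau> *\<^sub>R LM (cmat (A j))) = exp (Pm j * (\<tau> *\<^sub>R Jm j) * Pi j)" by (simp only:)
    also have "\<dots> = Pm j * exp (\<tau> *\<^sub>R Jm j) * Pi j" by (rule exp_conj[OF PPi[OF that]])
    finally show ?thesis .
  qed
  define h where "h e \<tau> = norm (Pi (snd e) * Pm (fst e) * exp (\<tau> *\<^sub>R Jm (fst e)))" for e \<tau>
  have heta: "h e (\<eta> e) < 1" and etapos: "\<eta> e > 0" if "e \<in> E" for e
  proof -
    obtain r s where e: "e = (r, s)" by (cases e)
    have "spec_norm ((matrix_inv (P s) ** P r) ** mat_exp (\<eta> (r, s) *\<^sub>R J r)) = h e (\<eta> e)"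
      unfolding spec_norm_LM h_def e Pm_def Pi_def Jm_def by (simp add: LM_mult LM_exp LM_scaleR)
    thus "h e (\<eta> e) < 1" "\<eta> e > 0" using eta that e by auto
  qed
  have hcont: "isCont (h e) \<tau>" for e \<tau>
  proof -
    have c1: "isCont (\<lambda>\<tau>. exp (\<tau> *\<^sub>R Jm (fst e))) \<tau>"
      by (rule has_vector_derivative_continuous[OF exp_scaleR_has_vector_derivative_right])
    have "isCont (\<lambda>\<tau>. Pi (snd e) * Pm (fst e) * exp (\<tau> *\<^sub>R Jm (fst e))) \<tau>"
      by (rule continuous_mult[OF continuous_const c1])
    hence "isCont (\<lambda>\<tau>. norm (Pi (snd e) * Pm (fst e) * exp (\<tau> *\<^sub>R Jm (fst e)))) \<tau>"
      by (rule continuous_norm)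
    thus ?thesis unfolding h_def[abs_def] by simp
  qed
  define qe where "qe e = (1 + h e (\<eta> e)) / 2" for e
  have "\<forall>e\<in>E. \<exists>d. 0 < d \<and> d \<le> \<eta> e / 2 \<and> (\<forall>\<tau>. \<bar>\<tau> - \<eta> e\<bar> < d \<longrightarrow> h e \<tau> < qe e)"
  proof
    fix e assume eE: "e \<in> E"
    have "0 < (1 - h e (\<eta> e)) / 2" using heta[OF eE] by simp
    then obtain d where d: "d > 0" "\<And>x'. dist x' (\<eta> e) < d \<Longrightarrow> dist (h e x') (h e (\<eta> e)) < (1 - h e (\<eta> e)) / 2"
      using hcont[where e=e and \<tau>="\<eta> e"] unfolding continuous_at_eps_delta by blast
    show "\<exists>d. 0 < d \<and> d \<le> \<eta> e / 2 \<and> (\<forall>\<tau>. \<bar>\<tau> - \<eta> e\<bar> < d \<longrightarrow> h e \<tau> < qe e)"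
    proof (intro exI[of _ "min d (\<eta> e / 2)"] conjI allI impI)
      show "0 < min d (\<eta> e / 2)" using d etapos[OF eE] by simp
      show "min d (\<eta> e / 2) \<le> \<eta> e / 2" by simp
      fix \<tau> assume "\<bar>\<tau> - \<eta> e\<bar> < min d (\<eta> e / 2)"
      hence "dist \<tau> (\<eta> e) < d" by (simp add: dist_real_def)
      from d(2)[OF this] have "\<bar>h e \<tau> - h e (\<eta> e)\<bar> < (1 - h e (\<eta> e)) / 2"
        by (simp add: dist_real_def)
      hence "h e \<tau> - h e (\<eta> e) < (1 - h e (\<eta> e)) / 2" by (rule order_le_less_trans[OF abs_ge_self])
      hence "h e \<tau> < (1 + h e (\<eta> e)) / 2" by (simp add: field_simps)
      thus "h e \<tau> < qe e" by (simp add: qe_def)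
    qed
  qed
  then obtain \<delta> where \<delta>: "\<And>e. e \<in> E \<Longrightarrow> 0 < \<delta> e \<and> \<delta> e \<le> \<eta> e / 2 \<and> (\<forall>\<tau>. \<bar>\<tau> - \<eta> e\<bar> < \<delta> e \<longrightarrow> h e \<tau> < qe e)"
    by metis
  have finE: "finite E" by (rule finite_subset[OF edges]) simp
  define q where "q = Max (insert (1/2) (qe ` E))"
  have q1: "1/2 \<le> q" unfolding q_def using finE by (intro Max_ge) auto
  have qe_le: "qe e \<le> q" if "e \<in> E" for e unfolding q_def using finE that by simp
  have q2: "q < 1" unfolding q_def using finE heta by (simp add: qe_def)
  define T where "T = 1 + (\<Sum>e\<in>E. \<eta> e + \<delta> e)"
  have nn: "0 \<le> \<eta> e + \<delta> e" if "e \<in> E" for e using \<delta>[OF that] etapos[OF that] by simp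
  have Tle: "\<eta> e + \<delta> e \<le> T" if "e \<in> E" for e
  proof -
    have "\<eta> e + \<delta> e \<le> (\<Sum>e\<in>E. \<eta> e + \<delta> e)" by (rule member_le_sum) (use that finE nn in auto)
    thus ?thesis unfolding T_def by simp
  qed
  have Tpos: "0 < T" unfolding T_def using nn sum_nonneg[of E "\<lambda>e. \<eta> e + \<delta> e"]
    by (smt (verit))
  define I where "I e = {\<eta> e - \<delta> e <..< \<eta> e + \<delta> e}" for e
  show ?thesis
  proof (intro exI[of _ I] conjI ballI allI impI)
    fix e assume eE: "e \<in> E"
    show "open (I e)" by (simp add: I_def)
    show "is_interval (I e)" by (simp add: I_def is_interval_convex_1)
    show "I e \<subseteq> {0<..}" using \<delta>[OF eE] etapos[OF eE] by (auto simp: I_def)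
    show "\<eta> e \<in> I e" using \<delta>[OF eE] by (simp add: I_def)
  next
    fix \<sigma> ts assume H: "admissible_signal E \<sigma> ts \<and> dwell_in I \<sigma> ts"
    hence adm: "admissible_signal E \<sigma> ts" and dw: "\<And>i. ts (Suc i) - ts i \<in> I (\<sigma> (ts i), \<sigma> (ts (Suc i)))"
      unfolding dwell_in_def by auto
    have inE: "(\<sigma> (ts i), \<sigma> (ts (Suc i))) \<in> E" for i using adm unfolding admissible_signal_def by auto
    have inV: "\<sigma> (ts i) \<in> {1..k}" for i using inE[of i] edges by auto
    show "switched_GES A \<sigma> ts"
    proof (rule ges_core[where V="{1..k}" and Pm=Pm and Pi=Pi and Jm=Jm and q=q and T=T, OF adm])
      show "finite {1..k}" by simp
      show "\<And>i. \<sigma> (ts i) \<in> {1..k}" by (rule inV)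
      show "\<And>j \<tau>. j \<in> {1..k} \<Longrightarrow> exp (\<tau> *\<^sub>R LM (cmat (A j))) = Pm j * exp (\<tau> *\<^sub>R Jm j) * Pi j"
        by (rule expA)
      show "1/2 \<le> q" by (rule q1)
      show "q < 1" by (rule q2)
      show "0 < T" by (rule Tpos)
      fix i
      let ?e = "(\<sigma> (ts i), \<sigma> (ts (Suc i)))"
      have d: "\<bar>(ts (Suc i) - ts i) - \<eta> ?e\<bar> < \<delta> ?e" and d2: "ts (Suc i) - ts i < \<eta> ?e + \<delta> ?e"
        using dw[of i] by (auto simp: I_def)
      have "h ?e (ts (Suc i) - ts i) < qe ?e" using \<delta>[OF inE[of i]] d by blast
      thus "norm (Pi (\<sigma> (ts (Suc i))) * Pm (\<sigma> (ts i)) * exp ((ts (Suc i) - ts i) *\<^sub>R Jm (\<sigma> (ts i)))) \<le> q"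
        using qe_le[OF inE[of i]] unfolding h_def by simp
      show "ts (Suc i) - ts i \<le> T" using d2 Tle[OF inE[of i]] by simp
    qed
  qed
qed


end
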